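(* Let $n\ge 1$, let $g\in C(\mathbb{R}^n)\cap L^\infty(\mathbb{R}^n)$ be nonnegative and not identically zero, and let $$u(x,t)=\frac{1}{(4\pi t)^{n/2}}\int_{\mathbb{R}^n} g(y)\,e^{-\frac{|x-y|^2}{4t}}\,dy,\qquad x\in\mathbb{R}^n,\ t>0.$$ Let $\alpha,\beta,\gamma$ be nonnegative constants with $(n-1)(\alpha+\beta)+\gamma\le 1$. Then for all $x\in\mathbb{R}^n$ and $t>0$, $$\frac{\Delta u}{u}-\alpha\sum_{\substack{i,j=1\\ i\neq j}}^{n}\frac{u_{x_ix_j}}{u}-\beta\sum_{\substack{i,j=1\\ i\neq j}}^{n}\frac{u_{x_i}u_{x_j}}{u^2}-\gamma\frac{|\nabla u|^2}{u^2}\ \ge\ -\frac{n}{2t},$$ where all functions are evaluated at $(x,t)$.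
   Context: $u$ is the solution of the heat equation $u_t=\Delta u$ on $\mathbb{R}^n\times(0,\infty)$ given by the heat-kernel representation formula with initial datum $g$; it is smooth and strictly positive for $t>0$. Subscripts denote partial derivatives in the spatial variables, $\Delta u=\sum_{i=1}^n u_{x_ix_i}$ and $|\nabla u|^2=\sum_{i=1}^n u_{x_i}^2$. Sums over $i\ne j$ run over all ordered pairs $(i,j)$ with $i,j\in\{1,\dots,n\}$, $i\neq j$ (empty when $n=1$). *)

theory Defs
  imports "HOL-Analysis.Analysis"
begin

definition heat_sol :: "(real^'n \<Rightarrow> real) \<Rightarrow> real^'n \<Rightarrow> real \<Rightarrow> real" where
  "heat_sol g x t =
     (1 / (4 * pi * t) powr (real CARD('n) / 2)) *
     (\<integral>y. g y * exp (- (norm (x - y))\<^sup>2 / (4 * t)) \<partial>lborel)"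

definition pd :: "'n \<Rightarrow> (real^'n \<Rightarrow> real) \<Rightarrow> real^'n \<Rightarrow> real" where
  "pd i f x = deriv (\<lambda>s. f (x + s *\<^sub>R axis i 1)) 0"

end

theory Submission
  imports Defs "HOL-Probability.Distributions"
begin


lemma gauss1:
  fixes k a :: real assumes k: "k > 0"
  shows "integrable lborel (\<lambda>s. exp (- k * (a - s)\<^sup>2))"
proof -
  define \<sigma> where "\<sigma> = sqrt (1 / (2 * k))"
  have sp: "\<sigma> > 0" using k by (simp add: \<sigma>_def)
  have s2: "\<sigma>\<^sup>2 = 1 / (2*k)" using k by (simp add: \<sigma>_def)
  have "integrable lborel (\<lambda>s. sqrt (2 * pi * \<sigma>\<^sup>2) * normal_density a \<sigma> s)"
    using integrable_normal_density[OF sp] by simp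
  moreover have "sqrt (2 * pi * \<sigma>\<^sup>2) * normal_density a \<sigma> s = exp (- k * (a - s)\<^sup>2)" for s
    using sp k unfolding normal_density_def s2
    by (simp add: power2_commute field_simps)
  ultimately show ?thesis by simp
qed

lemma gaussn:
  fixes k :: real and z :: "'a::euclidean_space" assumes k: "k > 0"
  shows "integrable lborel (\<lambda>y. exp (- k * (norm (z - y))\<^sup>2))"
proof -
  have eq: "exp (- k * (norm (z - y))\<^sup>2) = (\<Prod>b\<in>Basis. (\<lambda>b s. exp (- k * (z \<bullet> b - s)\<^sup>2)) b (y \<bullet> b))" for y
  proof -
    have "(norm (z - y))\<^sup>2 = (\<Sum>b\<in>Basis. (z \<bullet> b - y \<bullet> b)\<^sup>2)"
      unfolding power2_norm_eq_inner euclidean_inner[of "z-y" "z-y"]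
      by (simp add: inner_diff_left power2_eq_square)
    then show ?thesis
      by (simp add: exp_sum[symmetric] sum_distrib_left sum_negf)
  qed
  have "(\<integral>\<^sup>+y. ennreal (norm (exp (- k * (norm (z - y))\<^sup>2))) \<partial>lborel)
     = (\<integral>\<^sup>+y. (\<Prod>b\<in>Basis. ennreal (exp (- k * (z \<bullet> b - y \<bullet> b)\<^sup>2))) \<partial>lborel)"
    by (intro nn_integral_cong) (subst eq, simp add: prod_ennreal abs_prod)
  also have "\<dots> = (\<Prod>b\<in>Basis. (\<integral>\<^sup>+s. ennreal (exp (- k * (z \<bullet> b - s)\<^sup>2)) \<partial>lborel))"
    by (rule nn_integral_lborel_prod[where f="\<lambda>b s. ennreal (exp (- k * (z \<bullet> b - s)\<^sup>2))"]) auto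
  also have "\<dots> < \<infinity>"
  proof -
    have "(\<integral>\<^sup>+s. ennreal (exp (- k * (z \<bullet> b - s)\<^sup>2)) \<partial>lborel) < \<infinity>" for b
      using gauss1[OF k, of "z \<bullet> b"] unfolding integrable_iff_bounded by simp
    then show ?thesis by (simp add: less_top[symmetric] ennreal_prod_eq_top)
  qed
  finally show ?thesis unfolding integrable_iff_bounded by simp
qed

lemma gausspoly:
  fixes k :: real and z :: "'a::euclidean_space" assumes k: "k > 0"
  shows "integrable lborel (\<lambda>y. exp (- k * (norm (z - y))\<^sup>2) * (1 + norm (z - y))\<^sup>2)"
proof (rule Bochner_Integration.integrable_bound)
  show "integrable lborel (\<lambda>y. (2 + 4 / k) * exp (- (k/2) * (norm (z - y))\<^sup>2))"
    using gaussn[of "k/2" z] k by simp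
  show "(\<lambda>y. exp (- k * (norm (z - y))\<^sup>2) * (1 + norm (z - y))\<^sup>2) \<in> borel_measurable lborel"
    by measurable
  show "AE y in lborel. norm (exp (- k * (norm (z - y))\<^sup>2) * (1 + norm (z - y))\<^sup>2)
           \<le> norm ((2 + 4 / k) * exp (- (k/2) * (norm (z - y))\<^sup>2))"
  proof (rule AE_I2)
    fix y
    define r where "r = norm (z - y)"
    have r0: "r \<ge> 0" by (simp add: r_def)
    have e: "exp (- k * r\<^sup>2) = exp (- (k/2) * r\<^sup>2) * exp (- (k/2) * r\<^sup>2)"
      by (simp add: exp_add[symmetric])
    have a: "(k/2) * r\<^sup>2 \<le> exp ((k/2) * r\<^sup>2)"
      using exp_ge_add_one_self[of "(k/2) * r\<^sup>2"] by linarith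
    have b: "exp ((k/2) * r\<^sup>2) * exp (- (k/2) * r\<^sup>2) = 1"
      by (simp add: exp_add[symmetric])
    have c: "r\<^sup>2 * exp (- (k/2) * r\<^sup>2) \<le> 2 / k"
    proof -
      define p where "p = exp (- (k/2) * r\<^sup>2)"
      define q where "q = exp ((k/2) * r\<^sup>2)"
      have p0: "p \<ge> 0" by (simp add: p_def)
      have "(k/2) * r\<^sup>2 * p \<le> q * p"
        by (rule mult_right_mono[OF a[folded q_def] p0])
      moreover have "q * p = 1" using b by (simp add: p_def q_def)
      ultimately have "(k/2) * (r\<^sup>2 * p) \<le> 1" by (simp add: mult.assoc)
      then have "r\<^sup>2 * p \<le> 2 / k" using k by (simp add: field_simps)
      then show ?thesis by (simp add: p_def)
    qed
    have d: "(1 + r)\<^sup>2 \<le> 2 + 2 * r\<^sup>2"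
      using zero_le_power2[of "r - 1"] by (simp add: power2_eq_square algebra_simps)
    have "exp (- k * r\<^sup>2) * (1 + r)\<^sup>2 \<le> exp (- k * r\<^sup>2) * (2 + 2 * r\<^sup>2)"
      by (rule mult_left_mono[OF d]) simp
    also have "\<dots> = exp (- (k/2) * r\<^sup>2) * (2 * exp (- (k/2) * r\<^sup>2) + 2 * (r\<^sup>2 * exp (- (k/2) * r\<^sup>2)))"
      unfolding e by (simp add: algebra_simps)
    also have "\<dots> \<le> exp (- (k/2) * r\<^sup>2) * (2 * 1 + 2 * (2 / k))"
      using c k by (intro mult_left_mono add_mono) auto
    finally have "exp (- k * r\<^sup>2) * (1 + r)\<^sup>2 \<le> (2 + 4 / k) * exp (- (k/2) * r\<^sup>2)"
      by (simp add: algebra_simps)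
    then show "norm (exp (- k * (norm (z - y))\<^sup>2) * (1 + norm (z - y))\<^sup>2)
           \<le> norm ((2 + 4 / k) * exp (- (k/2) * (norm (z - y))\<^sup>2))"
      using k r0 unfolding r_def[symmetric] by simp
  qed
qed



lemma leibniz0:
  fixes F F' :: "real \<Rightarrow> 'a::euclidean_space \<Rightarrow> real" and G :: "'a \<Rightarrow> real"
  assumes der: "\<And>s y. ((\<lambda>s. F s y) has_real_derivative F' s y) (at s)"
    and meas: "\<And>s. F s \<in> borel_measurable lborel"
    and meas': "F' 0 \<in> borel_measurable lborel"
    and intF: "integrable lborel (F 0)"
    and intG: "integrable lborel G"
    and bnd: "\<And>s y. \<bar>s\<bar> \<le> 1 \<Longrightarrow> \<bar>F' s y\<bar> \<le> G y"
  shows "((\<lambda>s. \<integral>y. F s y \<partial>lborel) has_real_derivative (\<integral>y. F' 0 y \<partial>lborel)) (at 0)"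
proof -
  have G0: "G y \<ge> 0" for y using bnd[of 0 y] by simp
  have dq: "\<bar>(F h y - F 0 y) / h\<bar> \<le> G y" if h: "h \<noteq> 0" "\<bar>h\<bar> \<le> 1" for h y
  proof (cases "h > 0")
    case True
    from MVT2[of 0 h "\<lambda>s. F s y" "\<lambda>s. F' s y"] True der obtain \<xi> where
      xi: "0 < \<xi>" "\<xi> < h" "F h y - F 0 y = (h - 0) * F' \<xi> y" by blast
    have "\<bar>F' \<xi> y\<bar> \<le> G y" using xi h by (intro bnd) auto
    then show ?thesis using xi True by (simp add: abs_mult)
  next
    case False
    then have hn: "h < 0" using h by simp
    from MVT2[of h 0 "\<lambda>s. F s y" "\<lambda>s. F' s y"] hn der obtain \<xi> where
      xi: "h < \<xi>" "\<xi> < 0" "F 0 y - F h y = (0 - h) * F' \<xi> y" by blast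
    have "\<bar>F' \<xi> y\<bar> \<le> G y" using xi h by (intro bnd) auto
    moreover have "(F h y - F 0 y) / h = F' \<xi> y" using xi hn
      by (simp add: field_simps)
    ultimately show ?thesis by simp
  qed
  have intFh: "integrable lborel (F h)" if h: "\<bar>h\<bar> \<le> 1" for h
  proof (cases "h = 0")
    case True then show ?thesis using intF by simp
  next
    case False
    show ?thesis
    proof (rule Bochner_Integration.integrable_bound[where f="\<lambda>y. \<bar>F 0 y\<bar> + G y"])
      show "integrable lborel (\<lambda>y. \<bar>F 0 y\<bar> + G y)" using intF intG by auto
      show "F h \<in> borel_measurable lborel" by (rule meas)
      show "AE y in lborel. norm (F h y) \<le> norm (\<bar>F 0 y\<bar> + G y)"
      proof (rule AE_I2)
        fix y
        have "\<bar>(F h y - F 0 y) / h\<bar> \<le> G y" using dq False h by blast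
        then have "\<bar>F h y - F 0 y\<bar> \<le> \<bar>h\<bar> * G y" using False by (simp add: field_simps abs_divide)
        also have "\<dots> \<le> G y" using h G0[of y] by (simp add: mult_left_le_one_le)
        finally show "norm (F h y) \<le> norm (\<bar>F 0 y\<bar> + G y)" using G0[of y] by simp
      qed
    qed
  qed
  show ?thesis
    unfolding has_field_derivative_iff tendsto_at_iff_sequentially
  proof (intro allI impI)
    fix X :: "nat \<Rightarrow> real"
    assume X0: "\<forall>i. X i \<in> UNIV - {0}" and X: "X \<longlonglongrightarrow> 0"
    from tendstoD[OF X, of 1] have "eventually (\<lambda>n. norm (X n - 0) < 1) sequentially"
      by (simp add: dist_norm)
    then obtain N where N: "\<And>n. n \<ge> N \<Longrightarrow> \<bar>X n\<bar> < 1"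
      by (auto simp: eventually_sequentially)
    define Y where "Y n = X (n + N)" for n
    have Y0: "Y n \<noteq> 0" for n using X0 by (simp add: Y_def)
    have Y1: "\<bar>Y n\<bar> \<le> 1" for n using N[of "n + N"] by (simp add: Y_def)
    have Y: "Y \<longlonglongrightarrow> 0" unfolding Y_def by (rule LIMSEQ_ignore_initial_segment[OF X])
    define q where "q n y = (F (Y n) y - F 0 y) / Y n" for n y
    have eqn: "((\<integral>y. F (Y n) y \<partial>lborel) - (\<integral>y. F 0 y \<partial>lborel)) / (Y n - 0)
          = (\<integral>y. q n y \<partial>lborel)" for n
      unfolding q_def integral_divide_zero using intFh[OF Y1[of n]] intF
      by simp
    have "(\<lambda>n. \<integral>y. q n y \<partial>lborel) \<longlonglongrightarrow> (\<integral>y. F' 0 y \<partial>lborel)"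
    proof (rule integral_dominated_convergence[where w=G])
      show "F' 0 \<in> borel_measurable lborel" by (rule meas')
      show "q n \<in> borel_measurable lborel" for n
        unfolding q_def[abs_def] by (rule borel_measurable_divide[OF borel_measurable_diff[OF meas meas] borel_measurable_const])
      show "integrable lborel G" by (rule intG)
      show "AE y in lborel. (\<lambda>n. q n y) \<longlonglongrightarrow> F' 0 y"
      proof (rule AE_I2)
        fix y
        have "((\<lambda>h. (F h y - F 0 y) / (h - 0)) \<longlongrightarrow> F' 0 y) (at 0)"
          using der[where s=0 and y=y] unfolding has_field_derivative_iff .
        then have "((\<lambda>h. (F h y - F 0 y) / (h - 0)) \<circ> Y) \<longlonglongrightarrow> F' 0 y"
          unfolding tendsto_at_iff_sequentially using Y0 Y by blast
        then show "(\<lambda>n. q n y) \<longlonglongrightarrow> F' 0 y" by (simp add: q_def comp_def)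
      qed
      show "AE y in lborel. norm (q n y) \<le> G y" for n
        using dq[OF Y0 Y1] by (simp add: q_def)
    qed
    then have "(\<lambda>n. ((\<integral>y. F (Y n) y \<partial>lborel) - (\<integral>y. F 0 y \<partial>lborel)) / (Y n - 0)) \<longlonglongrightarrow> (\<integral>y. F' 0 y \<partial>lborel)"
      by (simp only: eqn)
    then show "((\<lambda>h. ((\<lambda>s. \<integral>y. F s y \<partial>lborel) h - (\<lambda>s. \<integral>y. F s y \<partial>lborel) 0) / (h - 0)) \<circ> X)
          \<longlonglongrightarrow> (\<integral>y. F' 0 y \<partial>lborel)"
      unfolding comp_def Y_def by (rule LIMSEQ_offset)
  qed
qed



lemma offdiag:
  fixes v :: "'n::finite \<Rightarrow> real"
  shows "(\<Sum>i\<in>UNIV. \<Sum>j\<in>UNIV - {i}. v i * v j) = (\<Sum>i\<in>UNIV. v i)\<^sup>2 - (\<Sum>i\<in>UNIV. (v i)\<^sup>2)"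
proof -
  have "(\<Sum>j\<in>UNIV - {i}. v i * v j) = v i * (\<Sum>j\<in>UNIV. v j) - (v i)\<^sup>2" for i
    by (simp add: sum_distrib_left sum_diff1 power2_eq_square)
  then have "(\<Sum>i\<in>UNIV. \<Sum>j\<in>UNIV - {i}. v i * v j) = (\<Sum>i\<in>UNIV. v i * (\<Sum>j\<in>UNIV. v j)) - (\<Sum>i\<in>UNIV. (v i)\<^sup>2)"
    by (simp add: sum_subtractf)
  also have "\<dots> = (\<Sum>i\<in>UNIV. v i)\<^sup>2 - (\<Sum>i\<in>UNIV. (v i)\<^sup>2)"
    by (simp add: sum_distrib_right[symmetric] power2_eq_square)
  finally show ?thesis .
qed

lemma offdiag_le:
  fixes v :: "'n::finite \<Rightarrow> real"
  shows "(\<Sum>i\<in>UNIV. \<Sum>j\<in>UNIV - {i}. v i * v j) \<le> (real CARD('n) - 1) * (\<Sum>i\<in>UNIV. (v i)\<^sup>2)"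
  using sum_squared_le_sum_of_squares[of v UNIV] unfolding offdiag
  by (simp add: algebra_simps)

lemma mult_offdiag_le:
  fixes v :: "'n::finite \<Rightarrow> real"
  assumes "a \<ge> 0"
  shows "a * (\<Sum>i\<in>UNIV. \<Sum>j\<in>UNIV - {i}. v i * v j) \<le> a * (real CARD('n) - 1) * (\<Sum>i\<in>UNIV. (v i)\<^sup>2)"
  using mult_left_mono[OF offdiag_le[of v] assms] by (simp add: mult.assoc)

lemma qpos:
  fixes v :: "'n::finite \<Rightarrow> real"
  assumes "\<alpha> \<ge> 0" "(real CARD('n) - 1) * \<alpha> \<le> 1"
  shows "(\<Sum>i\<in>UNIV. (v i)\<^sup>2) - \<alpha> * (\<Sum>i\<in>UNIV. \<Sum>j\<in>UNIV - {i}. v i * v j) \<ge> 0"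
proof -
  have S: "(\<Sum>i\<in>UNIV. (v i)\<^sup>2) \<ge> 0" by (simp add: sum_nonneg)
  have "\<alpha> * (real CARD('n) - 1) * (\<Sum>i\<in>UNIV. (v i)\<^sup>2) \<le> 1 * (\<Sum>i\<in>UNIV. (v i)\<^sup>2)"
    using assms(2) S by (intro mult_right_mono) (auto simp: mult.commute)
  then show ?thesis using mult_offdiag_le[OF assms(1), of v] by linarith
qed

lemma qform_C:
  fixes f :: "'n::finite \<Rightarrow> 'n \<Rightarrow> real"
  shows "(\<Sum>i\<in>UNIV. \<Sum>j\<in>UNIV. (if i = j then 1 else - \<alpha>) * f i j)
       = (\<Sum>i\<in>UNIV. f i i) - \<alpha> * (\<Sum>i\<in>UNIV. \<Sum>j\<in>UNIV - {i}. f i j)"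
proof -
  have "(\<Sum>j\<in>UNIV. (if i = j then 1 else - \<alpha>) * f i j) = f i i - \<alpha> * (\<Sum>j\<in>UNIV - {i}. f i j)" for i
  proof -
    have "(\<Sum>j\<in>UNIV. (if i = j then 1 else - \<alpha>) * f i j)
        = (if i = i then 1 else - \<alpha>) * f i i + (\<Sum>j\<in>UNIV - {i}. (if i = j then 1 else - \<alpha>) * f i j)"
      by (rule sum.remove) auto
    also have "(\<Sum>j\<in>UNIV - {i}. (if i = j then 1 else - \<alpha>) * f i j) = (\<Sum>j\<in>UNIV - {i}. - \<alpha> * f i j)"
      by (rule sum.cong) auto
    finally show ?thesis by (simp add: sum_distrib_left sum_negf)
  qed
  then show ?thesis by (simp add: sum_subtractf sum_distrib_left)
qed

lemma quad_int:
  fixes w :: "'a \<Rightarrow> real" and b :: "'a \<Rightarrow> 'n::finite \<Rightarrow> real"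
  assumes iw: "integrable M w" and ib: "\<And>i. integrable M (\<lambda>y. w y * b y i)"
    and ibb: "\<And>i j. integrable M (\<lambda>y. w y * (b y i * b y j))"
  shows "(\<integral>y. w y * (\<Sum>i\<in>UNIV. \<Sum>j\<in>UNIV. C i j * ((b y i - \<mu> i) * (b y j - \<mu> j))) \<partial>M)
    = (\<Sum>i\<in>UNIV. \<Sum>j\<in>UNIV. C i j * (\<integral>y. w y * (b y i * b y j) \<partial>M))
      - (\<Sum>i\<in>UNIV. \<Sum>j\<in>UNIV. C i j * ((\<integral>y. w y * b y i \<partial>M) * \<mu> j + \<mu> i * (\<integral>y. w y * b y j \<partial>M)))
      + (\<integral>y. w y \<partial>M) * (\<Sum>i\<in>UNIV. \<Sum>j\<in>UNIV. C i j * (\<mu> i * \<mu> j))"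
proof -
  have pw: "w y * (\<Sum>i\<in>UNIV. \<Sum>j\<in>UNIV. C i j * ((b y i - \<mu> i) * (b y j - \<mu> j)))
     = (\<Sum>i\<in>UNIV. \<Sum>j\<in>UNIV. C i j * (w y * (b y i * b y j)))
      - (\<Sum>i\<in>UNIV. \<Sum>j\<in>UNIV. C i j * ((w y * b y i) * \<mu> j + \<mu> i * (w y * b y j)))
      + w y * (\<Sum>i\<in>UNIV. \<Sum>j\<in>UNIV. C i j * (\<mu> i * \<mu> j))" for y
  proof -
    have "w y * (\<Sum>i\<in>UNIV. \<Sum>j\<in>UNIV. C i j * ((b y i - \<mu> i) * (b y j - \<mu> j)))
      = (\<Sum>i\<in>UNIV. \<Sum>j\<in>UNIV. C i j * (w y * (b y i * b y j)) - C i j * ((w y * b y i) * \<mu> j + \<mu> i * (w y * b y j))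
          + w y * (C i j * (\<mu> i * \<mu> j)))"
      unfolding sum_distrib_left by (intro sum.cong refl) (simp add: algebra_simps)
    then show ?thesis by (simp add: sum.distrib sum_subtractf sum_distrib_left)
  qed
  have i1: "integrable M (\<lambda>y. C i j * (w y * (b y i * b y j)))" for i j using ibb by simp
  have i2: "integrable M (\<lambda>y. C i j * ((w y * b y i) * \<mu> j + \<mu> i * (w y * b y j)))" for i j
    using ib by simp
  have i3: "(\<integral>y. (w y * b y i) * \<mu> j + \<mu> i * (w y * b y j) \<partial>M)
       = (\<integral>y. w y * b y i \<partial>M) * \<mu> j + \<mu> i * (\<integral>y. w y * b y j \<partial>M)" for i j
  proof -
    have a: "integrable M (\<lambda>y. (w y * b y i) * \<mu> j)" using ib[of i] by simp
    have b: "integrable M (\<lambda>y. \<mu> i * (w y * b y j))" using ib[of j] by simp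
    show ?thesis using Bochner_Integration.integral_add[OF a b] by simp
  qed
  show ?thesis
    unfolding pw
    using iw i1 i2 i3
    by (simp add: integral_sum integrable_sum)
qed

lemma main_ineq:
  fixes w :: "'a \<Rightarrow> real" and b :: "'a \<Rightarrow> 'n::finite \<Rightarrow> real"
  assumes iw: "integrable M w" and ib: "\<And>i. integrable M (\<lambda>y. w y * b y i)"
    and ibb: "\<And>i j. integrable M (\<lambda>y. w y * (b y i * b y j))"
    and w0: "\<And>y. w y \<ge> 0"
    and Mpos: "(\<integral>y. w y \<partial>M) > 0"
    and a0: "\<alpha> \<ge> 0" and b0: "\<beta> \<ge> 0" and g0: "\<gamma> \<ge> 0"
    and cond: "(real CARD('n) - 1) * (\<alpha> + \<beta>) + \<gamma> \<le> 1"
  shows "(\<integral>y. w y \<partial>M) * (\<Sum>i\<in>UNIV. (\<integral>y. w y * (b y i * b y i) \<partial>M))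
     - \<alpha> * (\<integral>y. w y \<partial>M) * (\<Sum>i\<in>UNIV. \<Sum>j\<in>UNIV - {i}. (\<integral>y. w y * (b y i * b y j) \<partial>M))
     - \<beta> * (\<Sum>i\<in>UNIV. \<Sum>j\<in>UNIV - {i}. (\<integral>y. w y * b y i \<partial>M) * (\<integral>y. w y * b y j \<partial>M))
     - \<gamma> * (\<Sum>i\<in>UNIV. (\<integral>y. w y * b y i \<partial>M)\<^sup>2) \<ge> 0"
proof -
  define Mw where "Mw = (\<integral>y. w y \<partial>M)"
  define S where "S i j = (\<integral>y. w y * (b y i * b y j) \<partial>M)" for i j
  define m where "m i = (\<integral>y. w y * b y i \<partial>M)" for i
  define C where "C i j = (if i = j then 1 else - \<alpha>)" for i j :: 'n
  define \<mu> where "\<mu> i = m i / Mw" for i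
  define Q where "Q = (\<Sum>i\<in>UNIV. (m i)\<^sup>2)"
  define Pm where "Pm = (\<Sum>i\<in>UNIV. \<Sum>j\<in>UNIV - {i}. m i * m j)"
  define Qm where "Qm = (\<Sum>i\<in>UNIV. \<Sum>j\<in>UNIV. C i j * (m i * m j))"
  define T1 where "T1 = (\<Sum>i\<in>UNIV. \<Sum>j\<in>UNIV. C i j * S i j)"
  have Mp: "Mw > 0" using Mpos by (simp add: Mw_def)
  have a1: "(real CARD('n) - 1) * \<alpha> \<le> 1"
  proof -
    have "(real CARD('n) - 1) \<ge> 0" by simp
    then have "(real CARD('n) - 1) * \<beta> \<ge> 0" using b0 by simp
    then show ?thesis using cond g0 by (simp add: algebra_simps)
  qed
  have QC: "(\<Sum>i\<in>UNIV. \<Sum>j\<in>UNIV. C i j * (v i * v j)) \<ge> 0" for v :: "'n \<Rightarrow> real"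
    using qform_C[of \<alpha> "\<lambda>i j. v i * v j"] qpos[OF a0 a1, of v] by (simp add: C_def power2_eq_square)
  have "0 \<le> (\<integral>y. w y * (\<Sum>i\<in>UNIV. \<Sum>j\<in>UNIV. C i j * ((b y i - \<mu> i) * (b y j - \<mu> j))) \<partial>M)"
    by (rule integral_nonneg_AE) (auto intro!: mult_nonneg_nonneg w0 QC)
  also have "\<dots> = T1 - (\<Sum>i\<in>UNIV. \<Sum>j\<in>UNIV. C i j * (m i * \<mu> j + \<mu> i * m j)) + Mw * (\<Sum>i\<in>UNIV. \<Sum>j\<in>UNIV. C i j * (\<mu> i * \<mu> j))"
    unfolding quad_int[OF iw ib ibb] T1_def S_def m_def Mw_def ..
  also have "(\<Sum>i\<in>UNIV. \<Sum>j\<in>UNIV. C i j * (m i * \<mu> j + \<mu> i * m j)) = 2 / Mw * Qm"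
    unfolding Qm_def \<mu>_def sum_distrib_left by (intro sum.cong refl) (simp add: field_simps)
  also have "(\<Sum>i\<in>UNIV. \<Sum>j\<in>UNIV. C i j * (\<mu> i * \<mu> j)) = Qm / Mw\<^sup>2"
    unfolding Qm_def \<mu>_def sum_divide_distrib by (intro sum.cong refl) (simp add: field_simps power2_eq_square)
  finally have "0 \<le> T1 - 2 / Mw * Qm + Mw * (Qm / Mw\<^sup>2)" .
  also have "T1 - 2 / Mw * Qm + Mw * (Qm / Mw\<^sup>2) = T1 - Qm / Mw"
    using Mp by (simp add: field_simps power2_eq_square)
  finally have "Qm / Mw \<le> T1" by simp
  then have k1: "Qm \<le> Mw * T1" using Mp by (simp add: field_simps)
  have T1e: "T1 = (\<Sum>i\<in>UNIV. S i i) - \<alpha> * (\<Sum>i\<in>UNIV. \<Sum>j\<in>UNIV - {i}. S i j)"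
    unfolding T1_def C_def by (rule qform_C)
  have Qme: "Qm = Q - \<alpha> * Pm"
    unfolding Qm_def C_def Q_def Pm_def using qform_C[of \<alpha> "\<lambda>i j. m i * m j"] by (simp add: power2_eq_square)
  have Pmle: "(\<alpha> + \<beta>) * Pm \<le> (\<alpha> + \<beta>) * (real CARD('n) - 1) * Q"
    unfolding Pm_def Q_def by (rule mult_offdiag_le) (simp add: a0 b0)
  have Q0: "Q \<ge> 0" unfolding Q_def by (simp add: sum_nonneg)
  have "0 \<le> (1 - (real CARD('n) - 1) * (\<alpha> + \<beta>) - \<gamma>) * Q"
    using cond Q0 by simp
  then have fin: "0 \<le> Mw * T1 - \<beta> * Pm - \<gamma> * Q"
    using k1 Qme Pmle by (simp add: algebra_simps)
  show ?thesis
    using fin unfolding T1e Mw_def[symmetric] S_def[symmetric] m_def[symmetric] Pm_def Q_def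
    by (simp add: algebra_simps)
qed



lemma norm_shift:
  fixes z y :: "real^'n"
  shows "(norm (z + s *\<^sub>R axis i 1 - y))\<^sup>2 = (norm (z - y))\<^sup>2 + 2 * s * ((z - y) $ i) + s\<^sup>2"
proof -
  have "z + s *\<^sub>R axis i 1 - y = (z - y) + s *\<^sub>R axis i 1" by simp
  then show ?thesis
    unfolding power2_norm_eq_inner
    by (simp add: inner_add_left inner_add_right inner_axis inner_axis' inner_axis_axis power2_eq_square algebra_simps)
qed

definition Phi :: "real \<Rightarrow> (real^'n \<Rightarrow> real) \<Rightarrow> real^'n \<Rightarrow> real^'n \<Rightarrow> real" where
  "Phi t g z y = g y * exp (- (norm (z - y))\<^sup>2 / (4 * t))"
definition Psi :: "real \<Rightarrow> (real^'n \<Rightarrow> real) \<Rightarrow> 'n \<Rightarrow> real^'n \<Rightarrow> real^'n \<Rightarrow> real" where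
  "Psi t g j z y = Phi t g z y * ((y - z) $ j / (2 * t))"
definition Om :: "real \<Rightarrow> (real^'n \<Rightarrow> real) \<Rightarrow> 'n \<Rightarrow> 'n \<Rightarrow> real^'n \<Rightarrow> real^'n \<Rightarrow> real" where
  "Om t g i j z y = Phi t g z y * ((y - z) $ i * ((y - z) $ j) / (4 * t\<^sup>2) - (if i = j then 1 / (2 * t) else 0))"

lemma Phi_shift:
  "Phi t g (z + s *\<^sub>R axis i 1) y = g y * exp (- ((norm (z - y))\<^sup>2 + 2 * s * ((z - y) $ i) + s\<^sup>2) / (4 * t))"
  unfolding Phi_def norm_shift ..

lemma comp_shift: "(y - (z + s *\<^sub>R axis i 1)) $ j = y $ j - z $ j - s * (if j = i then 1 else 0)"
  by (simp add: axis_def)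

lemma dPhi:
  assumes t: "t > 0"
  shows "((\<lambda>s. Phi t g (z + s *\<^sub>R axis i 1) y) has_real_derivative Psi t g i (z + s *\<^sub>R axis i 1) y) (at s)"
proof -
  define N where "N = (norm (z - y))\<^sup>2"
  define a where "a = (z - y) $ i"
  have "((\<lambda>s. g y * exp (- (N + 2 * s * a + s\<^sup>2) / (4 * t))) has_real_derivative
      g y * (exp (- (N + 2 * s * a + s\<^sup>2) / (4 * t)) * (- (2 * a + 2 * s) / (4 * t)))) (at s)"
    using t by (auto intro!: derivative_eq_intros simp: field_simps)
  moreover have "g y * (exp (- (N + 2 * s * a + s\<^sup>2) / (4 * t)) * (- (2 * a + 2 * s) / (4 * t)))
      = Psi t g i (z + s *\<^sub>R axis i 1) y"
    unfolding Psi_def Phi_shift comp_shift N_def a_def using t by (simp add: field_simps)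
  ultimately show ?thesis unfolding Phi_shift N_def a_def by simp
qed

lemma dPsi:
  assumes t: "t > 0"
  shows "((\<lambda>s. Psi t g j (z + s *\<^sub>R axis i 1) y) has_real_derivative Om t g i j (z + s *\<^sub>R axis i 1) y) (at s)"
proof -
  define N where "N = (norm (z - y))\<^sup>2"
  define a where "a = (z - y) $ i"
  define d where "d = (if j = i then 1 else 0 :: real)"
  define c where "c = y $ j - z $ j"
  have eqf: "Psi t g j (z + s *\<^sub>R axis i 1) y = g y * exp (- (N + 2 * s * a + s\<^sup>2) / (4 * t)) * ((c - s * d) / (2 * t))" for s
    unfolding Psi_def Phi_shift comp_shift N_def a_def c_def d_def by simp
  have "((\<lambda>s. g y * exp (- (N + 2 * s * a + s\<^sup>2) / (4 * t)) * ((c - s * d) / (2 * t))) has_real_derivative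
      g y * (exp (- (N + 2 * s * a + s\<^sup>2) / (4 * t)) * (- (2 * a + 2 * s) / (4 * t))) * ((c - s * d) / (2 * t))
      + g y * exp (- (N + 2 * s * a + s\<^sup>2) / (4 * t)) * (- d / (2 * t))) (at s)"
    using t by (auto intro!: derivative_eq_intros simp: field_simps)
  moreover have "g y * (exp (- (N + 2 * s * a + s\<^sup>2) / (4 * t)) * (- (2 * a + 2 * s) / (4 * t))) * ((c - s * d) / (2 * t))
      + g y * exp (- (N + 2 * s * a + s\<^sup>2) / (4 * t)) * (- d / (2 * t))
      = Om t g i j (z + s *\<^sub>R axis i 1) y"
    unfolding Om_def Phi_shift comp_shift N_def a_def c_def d_def using t
    by (auto simp: field_simps power2_eq_square)
  ultimately show ?thesis unfolding eqf by simp
qed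

definition KK :: "real \<Rightarrow> real" where "KK t = 1 + 1 / (4 * t\<^sup>2) + 1 / t"

definition GG :: "real \<Rightarrow> real \<Rightarrow> real^'n \<Rightarrow> real^'n \<Rightarrow> real" where
  "GG t B z y = B * exp (1 / (2 * t)) * KK t * (exp (- (1 / (8 * t)) * (norm (z - y))\<^sup>2) * (1 + norm (z - y))\<^sup>2)"

lemma GG_int: "t > 0 \<Longrightarrow> integrable lborel (GG t B z)"
  unfolding GG_def using gausspoly[of "1 / (8 * t)" z] by simp

lemma expbound:
  fixes z y :: "real^'n"
  assumes t: "t > 0" and s: "\<bar>s\<bar> \<le> 1"
  shows "exp (- (norm (z + s *\<^sub>R axis i 1 - y))\<^sup>2 / (4 * t)) \<le> exp (1 / (2 * t)) * exp (- (1 / (8 * t)) * (norm (z - y))\<^sup>2)"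
proof -
  define r where "r = norm (z - y)"
  define a where "a = (z - y) $ i"
  have ar: "\<bar>a\<bar> \<le> r" unfolding a_def r_def by (rule component_le_norm_cart)
  have "\<bar>s * a\<bar> \<le> r" using ar s by (simp add: abs_mult) (metis abs_ge_zero mult_le_one mult_left_le_one_le order.trans ar mult.commute)
  then have "- r \<le> s * a" by (simp add: abs_le_iff)
  then have sa: "2 * s * a \<ge> - 2 * r" by (simp add: algebra_simps)
  have "r\<^sup>2 / 2 - 2 * r + 2 \<ge> 0"
  proof -
    have "r\<^sup>2 / 2 - 2 * r + 2 = (r - 2)\<^sup>2 / 2" by (simp add: power2_eq_square field_simps)
    then show ?thesis by (metis half_gt_zero_iff le_less zero_le_power2 divide_nonneg_pos zero_less_numeral)
  qed
  then have key: "r\<^sup>2 + 2 * s * a + s\<^sup>2 \<ge> r\<^sup>2 / 2 - 2" using sa zero_le_power2[of s] by linarith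
  have "- (r\<^sup>2 + 2 * s * a + s\<^sup>2) / (4 * t) \<le> 1 / (2 * t) + (- (1 / (8 * t)) * r\<^sup>2)"
  proof -
    have e: "1 / (2 * t) + (- (1 / (8 * t)) * r\<^sup>2) - (- (r\<^sup>2 + 2 * s * a + s\<^sup>2) / (4 * t))
        = (r\<^sup>2 + 4 * s * a + 2 * s\<^sup>2 + 4) / (8 * t)"
      using t by (simp add: field_simps)
    have "r\<^sup>2 + 4 * s * a + 2 * s\<^sup>2 + 4 \<ge> 0" using key by simp
    then have "(r\<^sup>2 + 4 * s * a + 2 * s\<^sup>2 + 4) / (8 * t) \<ge> 0" using t by simp
    then show ?thesis using e by linarith
  qed
  then have "exp (- (r\<^sup>2 + 2 * s * a + s\<^sup>2) / (4 * t)) \<le> exp (1 / (2 * t) + (- (1 / (8 * t)) * r\<^sup>2))"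
    by simp
  then show ?thesis unfolding norm_shift r_def[symmetric] a_def[symmetric] exp_add .
qed

lemma Phi_bound:
  fixes z y :: "real^'n"
  assumes t: "t > 0" and s: "\<bar>s\<bar> \<le> 1" and gB: "\<And>y. \<bar>g y\<bar> \<le> B"
    and P: "\<bar>P\<bar> \<le> KK t * (1 + norm (z - y))\<^sup>2"
  shows "\<bar>Phi t g (z + s *\<^sub>R axis i 1) y * P\<bar> \<le> GG t B z y"
proof -
  have "\<bar>Phi t g (z + s *\<^sub>R axis i 1) y * P\<bar>
      = \<bar>g y\<bar> * exp (- (norm (z + s *\<^sub>R axis i 1 - y))\<^sup>2 / (4 * t)) * \<bar>P\<bar>"
    by (simp add: Phi_def abs_mult)
  also have "\<dots> \<le> B * (exp (1 / (2 * t)) * exp (- (1 / (8 * t)) * (norm (z - y))\<^sup>2)) * (KK t * (1 + norm (z - y))\<^sup>2)"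
    using order.trans[OF abs_ge_zero gB[of y]]
    by (intro mult_mono gB expbound[OF t s] P mult_nonneg_nonneg) auto
  also have "\<dots> = GG t B z y" by (simp add: GG_def algebra_simps)
  finally show ?thesis .
qed

lemma comp_bound:
  fixes z y :: "real^'n"
  assumes s: "\<bar>s\<bar> \<le> 1"
  shows "\<bar>(y - (z + s *\<^sub>R axis i 1)) $ j\<bar> \<le> 1 + norm (z - y)"
proof -
  have "\<bar>(y - z) $ j\<bar> \<le> norm (y - z)" by (rule component_le_norm_cart)
  moreover have "norm (y - z) = norm (z - y)" by (rule norm_minus_commute)
  moreover have "\<bar>s * (if j = i then 1 else 0)\<bar> \<le> 1" using s by simp
  ultimately show ?thesis unfolding comp_shift by (simp add: abs_le_iff)
qed

lemma KK_ge: "t > 0 \<Longrightarrow> 1 \<le> KK t" "t > 0 \<Longrightarrow> 1 / t \<le> KK t"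
  "t > 0 \<Longrightarrow> 1 / (4 * t\<^sup>2) + 1 / (2 * t) \<le> KK t"
proof -
  assume t: "t > 0"
  then have "1 / (2 * t) \<le> 1 / t" by (simp add: field_simps)
  then show "1 \<le> KK t" "1 / t \<le> KK t" "1 / (4 * t\<^sup>2) + 1 / (2 * t) \<le> KK t"
    using t by (auto simp: KK_def)
qed

lemma onepr: "r \<ge> 0 \<Longrightarrow> 1 \<le> (1 + r)\<^sup>2" "r \<ge> (0::real) \<Longrightarrow> 1 + r \<le> (1 + r)\<^sup>2"
  by (auto simp: power2_eq_square algebra_simps)

lemma Psi_P_bound:
  fixes z y :: "real^'n"
  assumes t: "t > 0" and s: "\<bar>s\<bar> \<le> 1"
  shows "\<bar>(y - (z + s *\<^sub>R axis i 1)) $ j / (2 * t)\<bar> \<le> KK t * (1 + norm (z - y))\<^sup>2"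
proof -
  define r where "r = norm (z - y)"
  have r0: "r \<ge> 0" by (simp add: r_def)
  have "\<bar>(y - (z + s *\<^sub>R axis i 1)) $ j / (2 * t)\<bar> = \<bar>(y - (z + s *\<^sub>R axis i 1)) $ j\<bar> / (2 * t)"
    using t by (simp add: abs_divide)
  also have "\<dots> \<le> (1 + r) / (2 * t)"
    using comp_bound[OF s, of y z i j] t by (simp add: r_def divide_right_mono)
  also have "\<dots> \<le> (1 + r)\<^sup>2 / t"
  proof -
    have "(1 + r) / (2 * t) \<le> (1 + r) / t" using t r0 by (simp add: field_simps)
    also have "\<dots> \<le> (1 + r)\<^sup>2 / t" using onepr(2)[OF r0] t by (simp add: divide_right_mono)
    finally show ?thesis .
  qed
  also have "\<dots> = (1 / t) * (1 + r)\<^sup>2" by simp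
  also have "\<dots> \<le> KK t * (1 + r)\<^sup>2" by (rule mult_right_mono[OF KK_ge(2)[OF t]]) simp
  finally show ?thesis by (simp add: r_def)
qed

lemma Om_P_bound:
  fixes z y :: "real^'n"
  assumes t: "t > 0" and s: "\<bar>s\<bar> \<le> 1"
  shows "\<bar>(y - (z + s *\<^sub>R axis k 1)) $ i * ((y - (z + s *\<^sub>R axis k 1)) $ j) / (4 * t\<^sup>2)
           - (if i = j then 1 / (2 * t) else 0)\<bar> \<le> KK t * (1 + norm (z - y))\<^sup>2"
proof -
  define r where "r = norm (z - y)"
  have r0: "r \<ge> 0" by (simp add: r_def)
  define p where "p = (y - (z + s *\<^sub>R axis k 1)) $ i"
  define q where "q = (y - (z + s *\<^sub>R axis k 1)) $ j"
  have p: "\<bar>p\<bar> \<le> 1 + r" unfolding p_def r_def by (rule comp_bound[OF s])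
  have q: "\<bar>q\<bar> \<le> 1 + r" unfolding q_def r_def by (rule comp_bound[OF s])
  have pq: "\<bar>p * q\<bar> \<le> (1 + r)\<^sup>2"
    unfolding abs_mult power2_eq_square using r0 by (intro mult_mono p q) auto
  have d: "\<bar>(if i = j then 1 / (2 * t) else 0)\<bar> \<le> 1 / (2 * t)" using t by simp
  have "\<bar>p * q / (4 * t\<^sup>2) - (if i = j then 1 / (2 * t) else 0)\<bar>
      \<le> \<bar>p * q\<bar> / (4 * t\<^sup>2) + 1 / (2 * t)"
  proof -
    have "\<bar>p * q / (4 * t\<^sup>2) - (if i = j then 1 / (2 * t) else 0)\<bar>
        \<le> \<bar>p * q / (4 * t\<^sup>2)\<bar> + \<bar>(if i = j then 1 / (2 * t) else 0)\<bar>"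
      by (rule abs_triangle_ineq4)
    moreover have "\<bar>p * q / (4 * t\<^sup>2)\<bar> = \<bar>p * q\<bar> / (4 * t\<^sup>2)" by (simp add: abs_divide)
    ultimately show ?thesis using d by linarith
  qed
  also have "\<dots> \<le> (1 + r)\<^sup>2 / (4 * t\<^sup>2) + 1 / (2 * t) * (1 + r)\<^sup>2"
    using pq onepr(1)[OF r0] t by (intro add_mono divide_right_mono) (auto intro: divide_right_mono)
  also have "\<dots> = (1 / (4 * t\<^sup>2) + 1 / (2 * t)) * (1 + r)\<^sup>2" by (simp add: algebra_simps)
  also have "\<dots> \<le> KK t * (1 + r)\<^sup>2" by (rule mult_right_mono[OF KK_ge(3)[OF t]]) simp
  finally show ?thesis by (simp add: r_def p_def q_def)
qed

lemma Phi_meas: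
  fixes z :: "real^'n"
  assumes gc: "continuous_on UNIV g"
  shows "Phi t g z \<in> borel_measurable lborel" "Psi t g j z \<in> borel_measurable lborel"
    "Om t g i j z \<in> borel_measurable lborel"
proof -
  have [measurable]: "g \<in> borel_measurable borel" using gc by (rule borel_measurable_continuous_onI)
  have [measurable]: "(\<lambda>x::real^'n. (x - z) $ k) \<in> borel_measurable borel" for k
    by (intro borel_measurable_continuous_onI continuous_intros)
  have [measurable]: "(\<lambda>x::real^'n. c::real) \<in> borel_measurable lborel" for c by simp
  have e1: "Phi t g z = (\<lambda>y. g y * exp (- (norm (z - y))\<^sup>2 / (4 * t)))" by (rule ext) (simp add: Phi_def)
  show 1: "Phi t g z \<in> borel_measurable lborel" unfolding e1 by measurable
  have e2: "Psi t g j z = (\<lambda>y. Phi t g z y * ((y - z) $ j / (2 * t)))" by (rule ext) (simp add: Psi_def)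
  show "Psi t g j z \<in> borel_measurable lborel" unfolding e2 using 1 by measurable
  have e3: "Om t g i j z = (\<lambda>y. Phi t g z y * ((y - z) $ i * ((y - z) $ j) / (4 * t\<^sup>2) - (if i = j then 1 / (2 * t) else 0)))"
    by (rule ext) (simp add: Om_def)
  show "Om t g i j z \<in> borel_measurable lborel" unfolding e3 using 1 by measurable
qed



lemma int_shift:
  fixes z :: "real^'n"
  assumes t: "t > 0" and gc: "continuous_on UNIV g" and gB: "\<And>y. \<bar>g y\<bar> \<le> B"
    and s: "\<bar>s\<bar> \<le> 1" and Pm: "P \<in> borel_measurable lborel"
    and P: "\<And>y. \<bar>P y\<bar> \<le> KK t * (1 + norm (z - y))\<^sup>2"
  shows "integrable lborel (\<lambda>y. Phi t g (z + s *\<^sub>R axis i 1) y * P y)"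
proof (rule Bochner_Integration.integrable_bound[where f="GG t B z"])
  show "integrable lborel (GG t B z)" by (rule GG_int[OF t])
  show "(\<lambda>y. Phi t g (z + s *\<^sub>R axis i 1) y * P y) \<in> borel_measurable lborel"
    using Phi_meas(1)[OF gc, of t "z + s *\<^sub>R axis i 1"] Pm by (rule borel_measurable_times)
  show "AE y in lborel. norm (Phi t g (z + s *\<^sub>R axis i 1) y * P y) \<le> norm (GG t B z y)"
  proof (rule AE_I2)
    fix y
    have B0: "B \<ge> 0" using gB[of y] by linarith
    have "KK t \<ge> 1" by (rule KK_ge(1)[OF t])
    then have G0: "GG t B z y \<ge> 0" unfolding GG_def using B0 by simp
    have "\<bar>Phi t g (z + s *\<^sub>R axis i 1) y * P y\<bar> \<le> GG t B z y"
      by (rule Phi_bound[OF t s gB P])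
    then show "norm (Phi t g (z + s *\<^sub>R axis i 1) y * P y) \<le> norm (GG t B z y)" using G0 by simp
  qed
qed

lemma heat_sol_Phi: "heat_sol g w t = (1 / (4 * pi * t) powr (real CARD('n) / 2)) * (\<integral>y. Phi t g w y \<partial>lborel)"
  for w :: "real^'n"
  unfolding heat_sol_def Phi_def ..

lemma pd_u:
  fixes g :: "real^'n \<Rightarrow> real"
  assumes t: "t > 0" and gc: "continuous_on UNIV g" and gB: "\<And>y. \<bar>g y\<bar> \<le> B"
  shows "pd i (\<lambda>z. heat_sol g z t) z = (1 / (4 * pi * t) powr (real CARD('n) / 2)) * (\<integral>y. Psi t g i z y \<partial>lborel)"
proof -
  define c where "c = (1 / (4 * pi * t) powr (real CARD('n) / 2))"
  have D: "((\<lambda>s. \<integral>y. Phi t g (z + s *\<^sub>R axis i 1) y \<partial>lborel) has_real_derivative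
      (\<integral>y. Psi t g i (z + 0 *\<^sub>R axis i 1) y \<partial>lborel)) (at 0)"
  proof (rule leibniz0[where F="\<lambda>s y. Phi t g (z + s *\<^sub>R axis i 1) y"
        and F'="\<lambda>s y. Psi t g i (z + s *\<^sub>R axis i 1) y" and G="GG t B z"])
    show "((\<lambda>s. Phi t g (z + s *\<^sub>R axis i 1) y) has_real_derivative Psi t g i (z + s *\<^sub>R axis i 1) y) (at s)" for s y
      by (rule dPhi[OF t])
    show "(\<lambda>y. Phi t g (z + s *\<^sub>R axis i 1) y) \<in> borel_measurable lborel" for s
      using Phi_meas(1)[OF gc] by simp
    show "(\<lambda>y. Psi t g i (z + 0 *\<^sub>R axis i 1) y) \<in> borel_measurable lborel"
      using Phi_meas(2)[OF gc] by simp
    show "integrable lborel (\<lambda>y. Phi t g (z + 0 *\<^sub>R axis i 1) y)"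
      using int_shift[OF t gc gB, of 0 "\<lambda>_. 1" z i] KK_ge(1)[OF t] onepr(1)[of "norm (z - _)"]
      by (simp add: order.trans)
    show "integrable lborel (GG t B z)" by (rule GG_int[OF t])
    show "\<bar>Psi t g i (z + s *\<^sub>R axis i 1) y\<bar> \<le> GG t B z y" if "\<bar>s\<bar> \<le> 1" for s y
      unfolding Psi_def by (rule Phi_bound[OF t that gB Psi_P_bound[OF t that]])
  qed
  have "pd i (\<lambda>z. heat_sol g z t) z = deriv (\<lambda>s. c * (\<integral>y. Phi t g (z + s *\<^sub>R axis i 1) y \<partial>lborel)) 0"
    unfolding pd_def heat_sol_Phi c_def ..
  also have "\<dots> = c * (\<integral>y. Psi t g i z y \<partial>lborel)"
    using DERIV_imp_deriv[OF DERIV_cmult[OF D, of c]] by simp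
  finally show ?thesis unfolding c_def .
qed

lemma pd_uu:
  fixes g :: "real^'n \<Rightarrow> real"
  assumes t: "t > 0" and gc: "continuous_on UNIV g" and gB: "\<And>y. \<bar>g y\<bar> \<le> B"
  shows "pd i (pd j (\<lambda>z. heat_sol g z t)) x = (1 / (4 * pi * t) powr (real CARD('n) / 2)) * (\<integral>y. Om t g i j x y \<partial>lborel)"
proof -
  define c where "c = (1 / (4 * pi * t) powr (real CARD('n) / 2))"
  have pj: "pd j (\<lambda>z. heat_sol g z t) = (\<lambda>z. c * (\<integral>y. Psi t g j z y \<partial>lborel))"
    by (rule ext) (simp add: pd_u[OF t gc gB] c_def)
  have cm: "(\<lambda>y::real^'n. (y - w) $ j / (2 * t)) \<in> borel_measurable lborel" for w
  proof -
    have "(\<lambda>y::real^'n. (y - w) $ j / (2 * t)) \<in> borel_measurable borel"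
      using t by (intro borel_measurable_continuous_onI continuous_intros) auto
    then show ?thesis by simp
  qed
  have D: "((\<lambda>s. \<integral>y. Psi t g j (x + s *\<^sub>R axis i 1) y \<partial>lborel) has_real_derivative
      (\<integral>y. Om t g i j (x + 0 *\<^sub>R axis i 1) y \<partial>lborel)) (at 0)"
  proof (rule leibniz0[where F="\<lambda>s y. Psi t g j (x + s *\<^sub>R axis i 1) y"
        and F'="\<lambda>s y. Om t g i j (x + s *\<^sub>R axis i 1) y" and G="GG t B x"])
    show "((\<lambda>s. Psi t g j (x + s *\<^sub>R axis i 1) y) has_real_derivative Om t g i j (x + s *\<^sub>R axis i 1) y) (at s)" for s y
      by (rule dPsi[OF t])
    show "(\<lambda>y. Psi t g j (x + s *\<^sub>R axis i 1) y) \<in> borel_measurable lborel" for s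
      using Phi_meas(2)[OF gc] by simp
    show "(\<lambda>y. Om t g i j (x + 0 *\<^sub>R axis i 1) y) \<in> borel_measurable lborel"
      using Phi_meas(3)[OF gc] by simp
    show "integrable lborel (\<lambda>y. Psi t g j (x + 0 *\<^sub>R axis i 1) y)"
      unfolding Psi_def
      by (rule int_shift[OF t gc gB _ cm]) (auto intro: Psi_P_bound[OF t, of 0, simplified])
    show "integrable lborel (GG t B x)" by (rule GG_int[OF t])
    show "\<bar>Om t g i j (x + s *\<^sub>R axis i 1) y\<bar> \<le> GG t B x y" if "\<bar>s\<bar> \<le> 1" for s y
      unfolding Om_def by (rule Phi_bound[OF t that gB Om_P_bound[OF t that]])
  qed
  have "pd i (pd j (\<lambda>z. heat_sol g z t)) x = deriv (\<lambda>s. c * (\<integral>y. Psi t g j (x + s *\<^sub>R axis i 1) y \<partial>lborel)) 0"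
    unfolding pd_def[of i] pj ..
  also have "\<dots> = c * (\<integral>y. Om t g i j x y \<partial>lborel)"
    using DERIV_imp_deriv[OF DERIV_cmult[OF D, of c]] by simp
  finally show ?thesis unfolding c_def .
qed



theorem theorem2p1:
  fixes g :: "real^'n \<Rightarrow> real" and \<alpha> \<beta> \<gamma> :: real
  assumes "continuous_on UNIV g"
    and "bounded (range g)"
    and "\<And>y. g y \<ge> 0"
    and "\<exists>y. g y \<noteq> 0"
    and "\<alpha> \<ge> 0" and "\<beta> \<ge> 0" and "\<gamma> \<ge> 0"
    and "(real CARD('n) - 1) * (\<alpha> + \<beta>) + \<gamma> \<le> 1"
  shows "\<And>x t. t > 0 \<Longrightarrow>
    (let u = (\<lambda>z. heat_sol g z t) in
       (\<Sum>i\<in>UNIV. pd i (pd i u) x) / u x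
       - \<alpha> * (\<Sum>i\<in>UNIV. \<Sum>j\<in>UNIV - {i}. pd i (pd j u) x / u x)
       - \<beta> * (\<Sum>i\<in>UNIV. \<Sum>j\<in>UNIV - {i}. pd i u x * pd j u x / (u x)\<^sup>2)
       - \<gamma> * (\<Sum>i\<in>UNIV. (pd i u x)\<^sup>2) / (u x)\<^sup>2
     \<ge> - real CARD('n) / (2 * t))"
proof -
  fix x :: "real^'n" and t :: real
  assume t: "t > 0"
  note gc = assms(1) and g0 = assms(3)
  from assms(2) obtain B where gB': "\<And>y. norm (g y) \<le> B" unfolding bounded_iff by auto
  have gB: "\<bar>g y\<bar> \<le> B" for y using gB'[of y] by simp
  define c where "c = (1 / (4 * pi * t) powr (real CARD('n) / 2))"
  have c0: "c > 0" unfolding c_def using t by simp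
  define w where "w y = Phi t g x y" for y
  define b where "b y i = (y - x) $ i / (2 * t)" for y i
  have w0: "w y \<ge> 0" for y unfolding w_def Phi_def using g0[of y] by simp
  have bm: "(\<lambda>y. b y i) \<in> borel_measurable lborel" for i
  proof -
    have "(\<lambda>y::real^'n. (y - x) $ i / (2 * t)) \<in> borel_measurable borel"
      using t by (intro borel_measurable_continuous_onI continuous_intros) auto
    then show ?thesis by (simp add: b_def)
  qed
  have ish: "integrable lborel (\<lambda>y. w y * P y)" if Pm: "P \<in> borel_measurable lborel"
    and P: "\<And>y. \<bar>P y\<bar> \<le> KK t * (1 + norm (x - y))\<^sup>2" for P
    using int_shift[OF t gc gB _ Pm P, of 0 i] unfolding w_def by simp
  have iw: "integrable lborel w"
    using ish[of "\<lambda>_. 1"] KK_ge(1)[OF t] onepr(1)[of "norm (x - _)"] by (simp add: order.trans)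
  have ib: "integrable lborel (\<lambda>y. w y * b y i)" for i
    unfolding b_def using Psi_P_bound[OF t, of 0 _ x _ i, simplified] bm[of i]
    by (intro ish) (auto simp: b_def)
  have iom: "integrable lborel (\<lambda>y. w y * (b y i * b y j - (if i = j then 1 / (2 * t) else 0)))" for i j
  proof (rule ish)
    show "(\<lambda>y. b y i * b y j - (if i = j then 1 / (2 * t) else 0)) \<in> borel_measurable lborel"
      using bm[of i] bm[of j] by measurable
    show "\<bar>b y i * b y j - (if i = j then 1 / (2 * t) else 0)\<bar> \<le> KK t * (1 + norm (x - y))\<^sup>2" for y
      using Om_P_bound[OF t, of 0 y x _ i j] t by (simp add: b_def power2_eq_square field_simps)
  qed
  have ibb: "integrable lborel (\<lambda>y. w y * (b y i * b y j))" for i j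
  proof -
    have "integrable lborel (\<lambda>y. w y * (b y i * b y j - (if i = j then 1 / (2 * t) else 0)) + (if i = j then 1 / (2 * t) else 0) * w y)"
      using iom[of i j] iw by auto
    then show ?thesis by (simp add: algebra_simps)
  qed
  define M where "M = (\<integral>y. w y \<partial>lborel)"
  define m where "m i = (\<integral>y. w y * b y i \<partial>lborel)" for i
  define S where "S i j = (\<integral>y. w y * (b y i * b y j) \<partial>lborel)" for i j
  have ux: "heat_sol g x t = c * M" unfolding heat_sol_Phi c_def M_def w_def ..
  have ui: "pd i (\<lambda>z. heat_sol g z t) x = c * m i" for i
    unfolding pd_u[OF t gc gB] c_def[symmetric] m_def w_def b_def Psi_def ..
  have uij: "pd i (pd j (\<lambda>z. heat_sol g z t)) x = c * (S i j - (if i = j then M / (2 * t) else 0))" for i j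
  proof -
    have "(\<integral>y. Om t g i j x y \<partial>lborel) = (\<integral>y. w y * (b y i * b y j) - (if i = j then 1 / (2 * t) else 0) * w y \<partial>lborel)"
      by (rule Bochner_Integration.integral_cong) (auto simp: Om_def w_def b_def algebra_simps power2_eq_square)
    also have "\<dots> = S i j - (if i = j then M / (2 * t) else 0)"
      using ibb[of i j] iw by (simp add: S_def M_def)
    finally show ?thesis unfolding pd_uu[OF t gc gB] c_def[symmetric] by simp
  qed
  have M0: "M \<ge> 0" unfolding M_def by (rule integral_nonneg_AE) (simp add: w0)
  define A where "A = (\<Sum>i\<in>UNIV. S i i)"
  define P where "P = (\<Sum>i\<in>UNIV. \<Sum>j\<in>UNIV - {i}. S i j)"
  define Pm where "Pm = (\<Sum>i\<in>UNIV. \<Sum>j\<in>UNIV - {i}. m i * m j)"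
  define Q where "Q = (\<Sum>i\<in>UNIV. (m i)\<^sup>2)"
  define n where "n = real CARD('n)"
  show "(let u = (\<lambda>z. heat_sol g z t) in
       (\<Sum>i\<in>UNIV. pd i (pd i u) x) / u x
       - \<alpha> * (\<Sum>i\<in>UNIV. \<Sum>j\<in>UNIV - {i}. pd i (pd j u) x / u x)
       - \<beta> * (\<Sum>i\<in>UNIV. \<Sum>j\<in>UNIV - {i}. pd i u x * pd j u x / (u x)\<^sup>2)
       - \<gamma> * (\<Sum>i\<in>UNIV. (pd i u x)\<^sup>2) / (u x)\<^sup>2
     \<ge> - real CARD('n) / (2 * t))"
  proof (cases "M = 0")
    case True
    then show ?thesis unfolding Let_def ux using t by simp
  next
    case False
    then have Mp: "M > 0" using M0 by simp
    have T1: "(\<Sum>i\<in>UNIV. pd i (pd i (\<lambda>z. heat_sol g z t)) x) / heat_sol g x t = A / M - n / (2 * t)"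
    proof -
      have "(\<Sum>i\<in>UNIV. pd i (pd i (\<lambda>z. heat_sol g z t)) x) = c * (A - n * (M / (2 * t)))"
        unfolding uij A_def n_def by (simp add: sum_distrib_left[symmetric] sum_subtractf)
      then show ?thesis unfolding ux using c0 Mp t by (simp add: field_simps)
    qed
    have T2: "(\<Sum>i\<in>UNIV. \<Sum>j\<in>UNIV - {i}. pd i (pd j (\<lambda>z. heat_sol g z t)) x / heat_sol g x t) = P / M"
    proof -
      have "(\<Sum>i\<in>UNIV. \<Sum>j\<in>UNIV - {i}. pd i (pd j (\<lambda>z. heat_sol g z t)) x / heat_sol g x t)
          = (\<Sum>i\<in>UNIV. \<Sum>j\<in>UNIV - {i}. S i j / M)"
        unfolding uij ux using c0 by (intro sum.cong refl) auto
      then show ?thesis unfolding P_def by (simp add: sum_divide_distrib)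
    qed
    have T3: "(\<Sum>i\<in>UNIV. \<Sum>j\<in>UNIV - {i}. pd i (\<lambda>z. heat_sol g z t) x * pd j (\<lambda>z. heat_sol g z t) x / (heat_sol g x t)\<^sup>2)
        = Pm / M\<^sup>2"
    proof -
      have "(\<Sum>i\<in>UNIV. \<Sum>j\<in>UNIV - {i}. pd i (\<lambda>z. heat_sol g z t) x * pd j (\<lambda>z. heat_sol g z t) x / (heat_sol g x t)\<^sup>2)
          = (\<Sum>i\<in>UNIV. \<Sum>j\<in>UNIV - {i}. m i * m j / M\<^sup>2)"
        unfolding ui ux using c0 by (intro sum.cong refl) (simp add: power2_eq_square field_simps)
      then show ?thesis unfolding Pm_def by (simp add: sum_divide_distrib)
    qed
    have T4: "(\<Sum>i\<in>UNIV. (pd i (\<lambda>z. heat_sol g z t) x)\<^sup>2) / (heat_sol g x t)\<^sup>2 = Q / M\<^sup>2"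
      unfolding ui ux Q_def using c0 by (simp add: power_mult_distrib sum_distrib_left[symmetric])
    have key: "M * A - \<alpha> * M * P - \<beta> * Pm - \<gamma> * Q \<ge> 0"
      unfolding M_def A_def P_def Pm_def Q_def S_def m_def
      by (rule main_ineq[OF iw ib ibb w0 Mp[unfolded M_def] assms(5,6,7,8)])
    have "A / M - \<alpha> * (P / M) - \<beta> * (Pm / M\<^sup>2) - \<gamma> * Q / M\<^sup>2 = (M * A - \<alpha> * M * P - \<beta> * Pm - \<gamma> * Q) / M\<^sup>2"
      using Mp by (simp add: field_simps power2_eq_square)
    also have "\<dots> \<ge> 0" using key by simp
    finally have fin: "A / M - \<alpha> * (P / M) - \<beta> * (Pm / M\<^sup>2) - \<gamma> * Q / M\<^sup>2 \<ge> 0" .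
    have T4': "\<gamma> * (\<Sum>i\<in>UNIV. (pd i (\<lambda>z. heat_sol g z t) x)\<^sup>2) / (heat_sol g x t)\<^sup>2 = \<gamma> * Q / M\<^sup>2"
      using T4 by (metis times_divide_eq_right)
    show ?thesis unfolding Let_def T1 T2 T3 T4' n_def[symmetric] using fin by simp
  qed
qed


end
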